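(* (a) Let $\Lambda>0$ and let $Q_1,Q_2:[0,\Lambda]\to\mathbb R$ be continuous and strictly monotone, both strictly increasing or both strictly decreasing. Then there is a unique $\lambda_1\in\arg\min_{\lambda\in[0,\Lambda]}\bigl(Q_1(\lambda)-Q_2(\Lambda-\lambda)\bigr)^2$, i.e. the Wardrop equilibrium $(\lambda_1,\Lambda-\lambda_1)$ exists and is unique. (b) For a platform $i$ with static price $\phi_i\in[0,\phi_h]$ and abandonment rate $\beta_i>0$, the maps $\lambda_i\mapsto\mathcal D_i(\lambda_i)$ and $\lambda_i\mapsto\mathcal B_i(\lambda_i)$, $\lambda_i\ge0$, are continuous and strictly monotone, with the same direction of monotonicity for both platforms, so each of $Q_i=\mathcal D_i$ and $Q_i=\mathcal B_i$ satisfies the hypothesis of (a).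
   Context: Model of platform $i$: passengers arrive as a Poisson process of rate $\lambda_i$; drivers arrive as a Poisson process of rate $\eta_i$ and wait FCFS. A passenger arriving when at least one driver waits is quoted price $\phi_i\in[0,\phi_h]$ and accepts (beginning a ride) with probability $f(\phi_i)$, else leaves; if no driver waits, the passenger is lost. Waiting drivers abandon independently at rate $\beta_i$; rides/breaks last Exp($\nu_i$), after which the driver rejoins the waiting queue with probability $p_i\in[0,1)$ and leaves otherwise. $e_i=\eta_i/(1-p_i)$. Here $f:[0,\phi_h]\to(0,1]$ is strictly concave, strictly decreasing, differentiable, $f(0)=1$. $\mathcal D_i(\lambda_i)=\bigl(\sum_{n\ge0}\frac{e_i^n}{\prod_{a=1}^n(\lambda_i f(\phi_i)+a\beta_i)}\bigr)^{-1}$ is the stationary probability of no waiting driver (empty product $=1$), and $\mathcal B_i=\mathcal D_i+(1-f(\phi_i))(1-\mathcal D_i)$ is the long-run fraction of passengers who do not take a ride. Two platforms share total passenger rate $\Lambda$; the Wardrop equilibrium for QoS metrics $Q_i$ is defined by the argmin in (a). *)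

theory Defs
  imports "HOL-Analysis.Analysis"
begin

definition eff_rate :: "real \<Rightarrow> real \<Rightarrow> real" where
  "eff_rate eta p = eta / (1 - p)"

text \<open>D_i(lambda): stationary probability of no waiting driver, for driver arrival rate eta,
  rejoin probability p, acceptance function f, price phi, abandonment rate beta.\<close>
definition prob_no_driver ::
  "real \<Rightarrow> real \<Rightarrow> (real \<Rightarrow> real) \<Rightarrow> real \<Rightarrow> real \<Rightarrow> real \<Rightarrow> real" where
  "prob_no_driver eta p f phi beta lam =
     1 / (\<Sum>n. (eff_rate eta p) ^ n / (\<Prod>a=1..n. (lam * f phi + real a * beta)))"

definition frac_no_ride ::
  "real \<Rightarrow> real \<Rightarrow> (real \<Rightarrow> real) \<Rightarrow> real \<Rightarrow> real \<Rightarrow> real \<Rightarrow> real" where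
  "frac_no_ride eta p f phi beta lam =
     prob_no_driver eta p f phi beta lam
     + (1 - f phi) * (1 - prob_no_driver eta p f phi beta lam)"

definition same_strict_mono :: "real set \<Rightarrow> (real \<Rightarrow> real) \<Rightarrow> (real \<Rightarrow> real) \<Rightarrow> bool" where
  "same_strict_mono S g h \<longleftrightarrow>
     (strict_mono_on S g \<and> strict_mono_on S h) \<or> (strict_antimono_on S g \<and> strict_antimono_on S h)"

end

theory Submission imports Defs begin

definition TT :: "real \<Rightarrow> real \<Rightarrow> real \<Rightarrow> real \<Rightarrow> nat \<Rightarrow> real" where
  "TT e c beta lam n = e ^ n / (\<Prod>a=1..n. (lam * c + real a * beta))"

lemma prod_pos':
  fixes lam c beta :: real
  assumes "lam \<ge> 0" "c > 0" "beta > 0"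
  shows "0 < (\<Prod>a=1..n. (lam * c + real a * beta))"
  using assms by (intro prod_pos) (auto intro!: add_nonneg_pos)

lemma prod_lb:
  fixes lam c beta :: real
  assumes "lam \<ge> 0" "c > 0" "beta > 0"
  shows "beta ^ n * fact n \<le> (\<Prod>a=1..n. (lam * c + real a * beta))"
proof (induction n)
  case 0 then show ?case by simp
next
  case (Suc n)
  have "beta ^ Suc n * fact (Suc n) = (beta ^ n * fact n) * (real (Suc n) * beta)"
    by (simp add: algebra_simps)
  also have "\<dots> \<le> (\<Prod>a=1..n. (lam * c + real a * beta)) * (lam * c + real (Suc n) * beta)"
    using Suc assms less_imp_le[OF prod_pos'[OF assms, of n]] by (intro mult_mono) auto
  also have "\<dots> = (\<Prod>a=1..Suc n. (lam * c + real a * beta))"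
    by (simp add: prod.cl_ivl_Suc)
  finally show ?case .
qed

lemma TT_bound:
  assumes "lam \<ge> 0" "c > 0" "beta > 0" "e > 0"
  shows "0 < TT e c beta lam n" "TT e c beta lam n \<le> inverse (fact n) * (e / beta) ^ n"
proof -
  have pp: "0 < (\<Prod>a=1..n. (lam * c + real a * beta))" by (rule prod_pos'[OF assms(1-3)])
  have en: "0 < e ^ n" using assms(4) by (rule zero_less_power)
  show "0 < TT e c beta lam n" unfolding TT_def by (rule divide_pos_pos[OF en pp])
  have bf: "0 < beta ^ n * fact n" using assms(3) by (intro mult_pos_pos zero_less_power) auto
  have "e ^ n / (\<Prod>a=1..n. (lam * c + real a * beta)) \<le> e ^ n / (beta ^ n * fact n)"
    by (rule divide_left_mono[OF prod_lb[OF assms(1-3)] less_imp_le[OF en] mult_pos_pos[OF pp bf]])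
  also have "\<dots> = inverse (fact n) * (e ^ n / beta ^ n)"
    by (simp add: divide_inverse mult.commute)
  also have "\<dots> = inverse (fact n) * (e / beta) ^ n"
    by (simp add: power_divide)
  finally show "TT e c beta lam n \<le> inverse (fact n) * (e / beta) ^ n" unfolding TT_def .
qed

lemma TT_summable:
  assumes "lam \<ge> 0" "c > 0" "beta > 0" "e > 0"
  shows "summable (TT e c beta lam)"
proof (rule summable_comparison_test'[where N=0])
  show "summable (\<lambda>n. inverse (fact n) * (e / beta) ^ n)" by (rule summable_exp)
  fix n :: nat
  have "norm (TT e c beta lam n) = TT e c beta lam n"
    using TT_bound(1)[OF assms, of n] by simp
  then show "norm (TT e c beta lam n) \<le> inverse (fact n) * (e / beta) ^ n"
    using TT_bound(2)[OF assms, of n] by simp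
qed

lemma TT_mono:
  assumes "0 \<le> x" "x \<le> y" "c > 0" "beta > 0" "e > 0"
  shows "TT e c beta y n \<le> TT e c beta x n"
proof -
  have px: "0 < (\<Prod>a=1..n. (x * c + real a * beta))" using prod_pos'[of x c beta n] assms by simp
  have py: "0 < (\<Prod>a=1..n. (y * c + real a * beta))" using prod_pos'[of y c beta n] assms by simp
  have xy: "x * c \<le> y * c" using assms by (simp add: mult_right_mono)
  have xc: "0 \<le> x * c" using assms by simp
  have "(\<Prod>a=1..n. (x * c + real a * beta)) \<le> (\<Prod>a=1..n. (y * c + real a * beta))"
  proof (rule prod_mono)
    fix i assume "i \<in> {1..n}"
    have "0 \<le> real i * beta" using assms by simp
    then show "0 \<le> x * c + real i * beta \<and> x * c + real i * beta \<le> y * c + real i * beta"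
      using xy xc by linarith
  qed
  moreover have "0 \<le> e ^ n" using assms by simp
  ultimately have "e ^ n / (\<Prod>a=1..n. (y * c + real a * beta)) \<le> e ^ n / (\<Prod>a=1..n. (x * c + real a * beta))"
    using px py by (intro divide_left_mono) auto
  then show ?thesis by (simp add: TT_def)
qed

lemma TT_strict1:
  assumes "0 \<le> x" "x < y" "c > 0" "beta > 0" "e > 0"
  shows "TT e c beta y 1 < TT e c beta x 1"
proof -
  have "x * c + beta < y * c + beta" using assms by simp
  moreover have "0 < x * c + beta" using assms by (simp add: add_nonneg_pos)
  moreover have "0 < y * c + beta" using assms by (simp add: add_nonneg_pos)
  ultimately have "e / (y * c + beta) < e / (x * c + beta)"
    using assms by (intro divide_strict_left_mono) auto
  then show ?thesis by (simp add: TT_def)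
qed

lemma sum_strict:
  assumes "0 \<le> x" "x < y" "c > 0" "beta > 0" "e > 0"
  shows "suminf (TT e c beta y) < suminf (TT e c beta x)"
proof -
  have s1: "summable (TT e c beta x)" "summable (TT e c beta y)"
    using assms by (auto intro!: TT_summable)
  have "0 < suminf (\<lambda>n. TT e c beta x n - TT e c beta y n)"
    using sum_less_suminf2[of "\<lambda>n. TT e c beta x n - TT e c beta y n" 0 1]
      summable_diff[OF s1] TT_mono[OF assms(1) _ assms(3-5)] TT_strict1[OF assms] assms(2)
    by auto
  then show ?thesis using suminf_diff[OF s1] by simp
qed

lemma sum_cont:
  assumes "c > 0" "beta > 0" "e > 0"
  shows "continuous_on {0..} (\<lambda>lam. suminf (TT e c beta lam))"
proof -
  have ul: "uniform_limit {0..} (\<lambda>n lam. \<Sum>i<n. TT e c beta lam i) (\<lambda>lam. suminf (\<lambda>i. TT e c beta lam i)) sequentially"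
    using TT_bound[OF _ assms] summable_exp[of "e/beta"]
    by (intro Weierstrass_m_test[where M="\<lambda>n. inverse (fact n) * (e / beta) ^ n"]) (auto simp: less_imp_le)
  have "\<forall>\<^sub>F n in sequentially. continuous_on {0..} (\<lambda>lam. \<Sum>i<n. TT e c beta lam i)"
  proof (intro always_eventually allI)
    fix n
    have nz: "\<forall>lam\<in>{0..}. (\<Prod>a=1..i. (lam * c + real a * beta)) \<noteq> 0" for i
    proof
      fix lam :: real assume "lam \<in> {0..}"
      then have "0 < (\<Prod>a=1..i. (lam * c + real a * beta))" using prod_pos'[OF _ assms(1,2)] by simp
      then show "(\<Prod>a=1..i. (lam * c + real a * beta)) \<noteq> 0" by linarith
    qed
    have "continuous_on {0..} (\<lambda>lam. \<Sum>i<n. e ^ i / (\<Prod>a=1..i. (lam * c + real a * beta)))"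
    proof (rule continuous_on_sum)
      fix i assume "i \<in> {..<n}"
      show "continuous_on {0..} (\<lambda>lam. e ^ i / (\<Prod>a=1..i. (lam * c + real a * beta)))"
        by (rule continuous_on_divide[OF continuous_on_const _ nz]) (intro continuous_intros)
    qed
    then show "continuous_on {0..} (\<lambda>lam. \<Sum>i<n. TT e c beta lam i)"
      by (simp add: TT_def)
  qed
  then show ?thesis using uniform_limit_theorem[OF _ ul] by simp
qed


lemma S_pos:
  assumes "lam \<ge> 0" "c > 0" "beta > 0" "e > 0"
  shows "0 < suminf (TT e c beta lam)"
  using TT_summable[OF assms] TT_bound(1)[OF assms] by (intro suminf_pos) auto

lemma D_props:
  assumes "c > 0" "beta > 0" "e > 0"
  shows "continuous_on {0..} (\<lambda>lam. 1 / suminf (TT e c beta lam))"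
    "strict_mono_on {0..} (\<lambda>lam. 1 / suminf (TT e c beta lam))"
proof -
  show "continuous_on {0..} (\<lambda>lam. 1 / suminf (TT e c beta lam))"
  proof (rule continuous_on_divide)
    show "continuous_on {0..} (\<lambda>lam. suminf (TT e c beta lam))" using sum_cont[OF assms] .
    show "\<forall>x\<in>{0..}. suminf (TT e c beta x) \<noteq> 0"
      using S_pos[OF _ assms] by (metis atLeast_iff less_irrefl)
  qed (rule continuous_on_const)
  show "strict_mono_on {0..} (\<lambda>lam. 1 / suminf (TT e c beta lam))"
  proof (rule strict_mono_onI)
    fix x y :: real assume "x \<in> {0..}" "y \<in> {0..}" "x < y"
    then show "1 / suminf (TT e c beta x) < 1 / suminf (TT e c beta y)"
      using sum_strict[of x y c beta e] S_pos[of y c beta e] assms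
      by (intro divide_strict_left_mono) auto
  qed
qed

lemma D_eq:
  "prob_no_driver eta p f phi beta = (\<lambda>lam. 1 / suminf (TT (eff_rate eta p) (f phi) beta lam))"
  by (rule ext) (simp add: prob_no_driver_def TT_def[abs_def])

lemma platform:
  assumes "eta > 0" "0 \<le> p" "p < 1" "beta > 0" "f phi > 0" "f phi \<le> 1"
  shows "continuous_on {0..} (prob_no_driver eta p f phi beta)"
    "strict_mono_on {0..} (prob_no_driver eta p f phi beta)"
    "continuous_on {0..} (frac_no_ride eta p f phi beta)"
    "strict_mono_on {0..} (frac_no_ride eta p f phi beta)"
proof -
  have e: "eff_rate eta p > 0" using assms by (simp add: eff_rate_def)
  note D = D_props[OF assms(5,4) e, folded D_eq]
  show c1: "continuous_on {0..} (prob_no_driver eta p f phi beta)" using D(1) .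
  show "strict_mono_on {0..} (prob_no_driver eta p f phi beta)" using D(2) .
  have fe: "frac_no_ride eta p f phi beta = (\<lambda>lam. prob_no_driver eta p f phi beta lam
     + (1 - f phi) * (1 - prob_no_driver eta p f phi beta lam))"
    by (simp add: frac_no_ride_def fun_eq_iff)
  show "continuous_on {0..} (frac_no_ride eta p f phi beta)"
    unfolding fe by (intro continuous_intros c1)
  show "strict_mono_on {0..} (frac_no_ride eta p f phi beta)"
  proof (rule strict_mono_onI)
    fix x y :: real assume "x \<in> {0..}" "y \<in> {0..}" "x < y"
    then have "prob_no_driver eta p f phi beta x < prob_no_driver eta p f phi beta y"
      using strict_mono_onD[OF D(2)] by blast
    then have "f phi * prob_no_driver eta p f phi beta x < f phi * prob_no_driver eta p f phi beta y"
      using assms(5) by simp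
    then show "frac_no_ride eta p f phi beta x < frac_no_ride eta p f phi beta y"
      unfolding fe by (simp add: algebra_simps)
  qed
qed

lemma argmin_unique:
  fixes g :: "real \<Rightarrow> real"
  assumes "a \<le> b" "continuous_on {a..b} g" "strict_mono_on {a..b} g"
  shows "\<exists>!l. l \<in> {a..b} \<and> (\<forall>m\<in>{a..b}. (g l)\<^sup>2 \<le> (g m)\<^sup>2)"
proof -
  have "continuous_on {a..b} (\<lambda>x. (g x)\<^sup>2)" by (intro continuous_intros assms)
  then obtain l where l: "l \<in> {a..b}" "\<forall>m\<in>{a..b}. (g l)\<^sup>2 \<le> (g m)\<^sup>2"
    using continuous_attains_inf[of "{a..b}" "\<lambda>x. (g x)\<^sup>2"] assms(1) by auto
  have uniq: "l1 = l2" if h1: "l1 \<in> {a..b}" "\<forall>m\<in>{a..b}. (g l1)\<^sup>2 \<le> (g m)\<^sup>2"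
    and h2: "l2 \<in> {a..b}" "\<forall>m\<in>{a..b}. (g l2)\<^sup>2 \<le> (g m)\<^sup>2" and lt: "l1 < l2" for l1 l2
  proof -
    have lt2: "g l1 < g l2" by (rule strict_mono_onD[OF assms(3) h1(1) h2(1) lt])
    have "(g l1)\<^sup>2 \<le> (g l2)\<^sup>2" "(g l2)\<^sup>2 \<le> (g l1)\<^sup>2" using h1 h2 by auto
    then have "(g l1)\<^sup>2 = (g l2)\<^sup>2" by simp
    then have "g l1 = g l2 \<or> g l1 = - g l2" by (simp add: power2_eq_iff)
    then have "g l1 = - g l2" using lt2 by auto
    then have neg: "g l1 < 0" "0 < g l2" using lt2 by auto
    have "continuous_on {l1..l2} g" by (rule continuous_on_subset[OF assms(2)]) (use h1(1) h2(1) in auto)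
    then obtain z where z: "l1 \<le> z" "z \<le> l2" "g z = 0"
      using IVT'[of g l1 0 l2] neg lt by auto
    then have "z \<in> {a..b}" using h1(1) h2(1) by auto
    then have "(g l1)\<^sup>2 \<le> 0" using h1(2) z(3) by force
    moreover have "0 < (g l1)\<^sup>2" using neg by simp
    ultimately show ?thesis by simp
  qed
  show ?thesis
  proof (rule ex1I[of _ l])
    show "l \<in> {a..b} \<and> (\<forall>m\<in>{a..b}. (g l)\<^sup>2 \<le> (g m)\<^sup>2)" using l by auto
  next
    fix y assume "y \<in> {a..b} \<and> (\<forall>m\<in>{a..b}. (g y)\<^sup>2 \<le> (g m)\<^sup>2)"
    then show "y = l" using uniq[of y l] uniq[of l y] l by (cases "y < l"; cases "l < y") auto
  qed
qed

lemma partA: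
  fixes Lam :: real and Q1 Q2 :: "real \<Rightarrow> real"
  assumes "Lam > 0" "continuous_on {0..Lam} Q1" "continuous_on {0..Lam} Q2"
    "same_strict_mono {0..Lam} Q1 Q2"
  shows "\<exists>!l. l \<in> {0..Lam} \<and>
           (\<forall>m\<in>{0..Lam}. (Q1 l - Q2 (Lam - l))\<^sup>2 \<le> (Q1 m - Q2 (Lam - m))\<^sup>2)"
proof -
  define g where "g = (\<lambda>l. Q1 l - Q2 (Lam - l))"
  have c2: "continuous_on {0..Lam} (\<lambda>l. Q2 (Lam - l))"
    by (rule continuous_on_compose2[OF assms(3)]) (auto intro!: continuous_intros)
  have cg: "continuous_on {0..Lam} g" unfolding g_def by (intro continuous_intros assms(2) c2)
  have "strict_mono_on {0..Lam} g \<or> strict_mono_on {0..Lam} (\<lambda>x. - g x)"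
    using assms(4) unfolding same_strict_mono_def
  proof
    assume h: "strict_mono_on {0..Lam} Q1 \<and> strict_mono_on {0..Lam} Q2"
    have "strict_mono_on {0..Lam} g"
    proof (rule strict_mono_onI)
      fix x y assume xy: "x \<in> {0..Lam}" "y \<in> {0..Lam}" "x < y"
      have "Q1 x < Q1 y" using h xy strict_mono_onD[of "{0..Lam}" Q1 x y] by blast
      moreover have "Q2 (Lam - y) < Q2 (Lam - x)"
        using h xy strict_mono_onD[of "{0..Lam}" Q2 "Lam - y" "Lam - x"] by auto
      ultimately show "g x < g y" unfolding g_def by simp
    qed
    then show ?thesis by simp
  next
    assume h: "strict_antimono_on {0..Lam} Q1 \<and> strict_antimono_on {0..Lam} Q2"
    have "strict_mono_on {0..Lam} (\<lambda>x. - g x)"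
    proof (rule strict_mono_onI)
      fix x y assume xy: "x \<in> {0..Lam}" "y \<in> {0..Lam}" "x < y"
      have "Q1 y < Q1 x" using h xy monotone_onD[of "{0..Lam}" "(<)" "\<lambda>x y. y < x" Q1 x y] by blast
      moreover have "Q2 (Lam - x) < Q2 (Lam - y)"
        using h xy monotone_onD[of "{0..Lam}" "(<)" "\<lambda>x y. y < x" Q2 "Lam - y" "Lam - x"] by auto
      ultimately show "- g x < - g y" unfolding g_def by simp
    qed
    then show ?thesis by simp
  qed
  then show ?thesis
  proof
    assume sm1: "strict_mono_on {0..Lam} g"
    have "\<exists>!l. l \<in> {0..Lam} \<and> (\<forall>m\<in>{0..Lam}. (g l)\<^sup>2 \<le> (g m)\<^sup>2)"
      by (rule argmin_unique[OF less_imp_le[OF assms(1)] cg sm1])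
    then show ?thesis unfolding g_def .
  next
    assume sm: "strict_mono_on {0..Lam} (\<lambda>x. - g x)"
    have "\<exists>!l. l \<in> {0..Lam} \<and> (\<forall>m\<in>{0..Lam}. (- g l)\<^sup>2 \<le> (- g m)\<^sup>2)"
      by (rule argmin_unique[OF less_imp_le[OF assms(1)] continuous_on_minus[OF cg] sm])
    then show ?thesis unfolding power2_minus g_def .
  qed
qed

theorem lemma2:
  fixes f :: "real \<Rightarrow> real" and phi_h :: real
    and eta1 eta2 p1 p2 beta1 beta2 phi1 phi2 :: real
  assumes phi_h: "phi_h > 0"
    and f_range: "\<forall>x\<in>{0..phi_h}. 0 < f x \<and> f x \<le> 1"
    and f0: "f 0 = 1"
    and f_dec: "strict_antimono_on {0..phi_h} f"
    and f_concave: "\<forall>x\<in>{0..phi_h}. \<forall>y\<in>{0..phi_h}. \<forall>t::real. x \<noteq> y \<and> 0 < t \<and> t < 1 \<longrightarrow>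
                      f (t * x + (1 - t) * y) > t * f x + (1 - t) * f y"
    and f_diff: "\<forall>x\<in>{0..phi_h}. f differentiable (at x within {0..phi_h})"
    and eta: "eta1 > 0" "eta2 > 0"
    and p: "0 \<le> p1" "p1 < 1" "0 \<le> p2" "p2 < 1"
    and beta: "beta1 > 0" "beta2 > 0"
    and phi: "phi1 \<in> {0..phi_h}" "phi2 \<in> {0..phi_h}"
  shows
    "(\<forall>(Lam::real) (Q1::real \<Rightarrow> real) (Q2::real \<Rightarrow> real).
        Lam > 0 \<and> continuous_on {0..Lam} Q1 \<and> continuous_on {0..Lam} Q2
        \<and> same_strict_mono {0..Lam} Q1 Q2 \<longrightarrow>
        (\<exists>!l. l \<in> {0..Lam} \<and>
           (\<forall>m\<in>{0..Lam}. (Q1 l - Q2 (Lam - l))\<^sup>2 \<le> (Q1 m - Q2 (Lam - m))\<^sup>2)))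
     \<and> continuous_on {0..} (prob_no_driver eta1 p1 f phi1 beta1)
     \<and> continuous_on {0..} (prob_no_driver eta2 p2 f phi2 beta2)
     \<and> continuous_on {0..} (frac_no_ride eta1 p1 f phi1 beta1)
     \<and> continuous_on {0..} (frac_no_ride eta2 p2 f phi2 beta2)
     \<and> same_strict_mono {0..} (prob_no_driver eta1 p1 f phi1 beta1)
                              (prob_no_driver eta2 p2 f phi2 beta2)
     \<and> same_strict_mono {0..} (frac_no_ride eta1 p1 f phi1 beta1)
                              (frac_no_ride eta2 p2 f phi2 beta2)"
proof -
  have f1: "0 < f phi1" "f phi1 \<le> 1" and f2: "0 < f phi2" "f phi2 \<le> 1"
    using f_range phi by auto
  note P1 = platform[of eta1 p1 beta1 f phi1, OF eta(1) p(1,2) beta(1) f1]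
  note P2 = platform[of eta2 p2 beta2 f phi2, OF eta(2) p(3,4) beta(2) f2]
  have A: "\<forall>(Lam::real) (Q1::real \<Rightarrow> real) (Q2::real \<Rightarrow> real).
        Lam > 0 \<and> continuous_on {0..Lam} Q1 \<and> continuous_on {0..Lam} Q2
        \<and> same_strict_mono {0..Lam} Q1 Q2 \<longrightarrow>
        (\<exists>!l. l \<in> {0..Lam} \<and>
           (\<forall>m\<in>{0..Lam}. (Q1 l - Q2 (Lam - l))\<^sup>2 \<le> (Q1 m - Q2 (Lam - m))\<^sup>2))"
    using partA by blast
  show ?thesis
    apply (intro conjI)
    apply (rule A)
    apply (rule P1(1))
    apply (rule P2(1))
    apply (rule P1(3))
    apply (rule P2(3))
    apply (unfold same_strict_mono_def)
    apply (rule disjI1, rule conjI, rule P1(2), rule P2(2))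
    apply (rule disjI1, rule conjI, rule P1(4), rule P2(4))
    done
qed

end
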